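(* Let $A$ be a nondegenerate observable of a finite-dimensional quantum system with eigenvalues $a_k$ and eigenvectors $|\varphi_k\rangle$, let $a_0=\min\{a_k-a_l: a_k>a_l\}$, and let $\hbar,\alpha,g_0,\lambda>0$. Let $\psi_{Pr},\Phi_{Po}\in L^2(\mathbb{R})$ be normalized, and for $t>0$ and $k\neq l$ define $$D_{kl}(t)=\int_{-\infty}^{\infty}e^{-\frac{i\lambda}{\hbar}(a_k-a_l)b}|\Phi_{Po}(b)|^2\,db\;\int_{-\infty}^{\infty}e^{-\frac{i}{\hbar}\alpha g_0 t(a_k-a_l)q}|\psi_{Pr}(q)|^2\,dq,$$ so that the reduced density matrix of the system is $\rho_{\mathcal S}(t)=\sum_{k,l}\langle\varphi_k|\psi_{\mathcal S}\rangle\langle\psi_{\mathcal S}|\varphi_l\rangle D_{kl}(t)|\varphi_k\rangle\langle\varphi_l|$ (with $D_{kk}=1$). Then: (a) if $\psi_{Pr}$ is momentum-limited of type $\kappa_0>0$, then $D_{kl}(t)=0$ for all $k\neq l$ and all $t>\frac{2\kappa_0\hbar}{\alpha g_0 a_0}$; (b) if $\Phi_{Po}$ is momentum-limited of type $b_0>0$ and $\lambda>\frac{2b_0\hbar}{a_0}$, then $D_{kl}(t)=0$ for all $k\neq l$ and all $t>0$. Hence in either case $\rho_{\mathcal S}$ is exactly diagonal in the eigenbasis of $A$.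
   Context: A function $\psi\in L^2(\mathbb{R})$ is momentum-limited of type $\kappa_0>0$ if $\psi(q)=\int_{-\hbar\kappa_0}^{\hbar\kappa_0}e^{ipq/\hbar}\tilde\psi(p)\,dp$ for some $\tilde\psi\in L^2(-\hbar\kappa_0,\hbar\kappa_0)$. Here $\lambda$ is the effective system–pointer coupling constant. *)

theory Defs
  imports "HOL-Analysis.Analysis"
begin

definition normalized_L2 :: "(real \<Rightarrow> complex) \<Rightarrow> bool" where
  "normalized_L2 f \<longleftrightarrow> f \<in> borel_measurable lborel
     \<and> integrable lborel (\<lambda>x. (cmod (f x))\<^sup>2)
     \<and> (\<integral>x. (cmod (f x))\<^sup>2 \<partial>lborel) = 1"

text \<open>Momentum-limited of type kappa0: psi(q) = int_{-hbar kappa0}^{hbar kappa0} e^{i p q/hbar} psit(p) dp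
  for some psit in L^2(-hbar kappa0, hbar kappa0); equality of L^2 elements, i.e. almost everywhere.\<close>
definition momentum_limited :: "real \<Rightarrow> real \<Rightarrow> (real \<Rightarrow> complex) \<Rightarrow> bool" where
  "momentum_limited hbar \<kappa>0 \<psi> \<longleftrightarrow>
     (\<exists>\<psi>t :: real \<Rightarrow> complex.
        set_borel_measurable lborel {-hbar*\<kappa>0 <..< hbar*\<kappa>0} \<psi>t
      \<and> set_integrable lborel {-hbar*\<kappa>0 <..< hbar*\<kappa>0} (\<lambda>p. (cmod (\<psi>t p))\<^sup>2)
      \<and> (AE q in lborel. \<psi> q =
            (LINT p : {-hbar*\<kappa>0 <..< hbar*\<kappa>0} | lborel. cis (p * q / hbar) * \<psi>t p)))"

definition decoh :: "real \<Rightarrow> real \<Rightarrow> real \<Rightarrow> real \<Rightarrow> (real \<Rightarrow> complex) \<Rightarrow> (real \<Rightarrow> complex)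
    \<Rightarrow> (nat \<Rightarrow> real) \<Rightarrow> nat \<Rightarrow> nat \<Rightarrow> real \<Rightarrow> complex" where
  "decoh hbar \<alpha> g0 lam \<psi>Pr \<Phi>Po a k l t =
     (LINT b | lborel. cis (- (lam / hbar) * (a k - a l) * b) * complex_of_real ((cmod (\<Phi>Po b))\<^sup>2))
   * (LINT q | lborel. cis (- (1 / hbar) * \<alpha> * g0 * t * (a k - a l) * q) * complex_of_real ((cmod (\<psi>Pr q))\<^sup>2))"

text \<open>Matrix entries of the reduced density matrix in the eigenbasis of A;
  c k = <phi_k|psi_S> are the coefficients of the system state.\<close>
definition rho_S :: "real \<Rightarrow> real \<Rightarrow> real \<Rightarrow> real \<Rightarrow> (real \<Rightarrow> complex) \<Rightarrow> (real \<Rightarrow> complex)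
    \<Rightarrow> (nat \<Rightarrow> real) \<Rightarrow> (nat \<Rightarrow> complex) \<Rightarrow> real \<Rightarrow> nat \<Rightarrow> nat \<Rightarrow> complex" where
  "rho_S hbar \<alpha> g0 lam \<psi>Pr \<Phi>Po a c t k l =
     c k * cnj (c l) * (if k = l then 1 else decoh hbar \<alpha> g0 lam \<psi>Pr \<Phi>Po a k l t)"

definition min_gap :: "nat \<Rightarrow> (nat \<Rightarrow> real) \<Rightarrow> real" where
  "min_gap n a = Min {a k - a l | k l. k < n \<and> l < n \<and> a l < a k}"

end

theory Submission imports Defs "HOL-Probability.Probability" "HOL-Real_Asymp.Real_Asymp" begin


lemma gauss_int:
  fixes c s :: real assumes c: "c > 0"
  shows "(LINT q|lborel. complex_of_real (exp (- ((c*q)\<^sup>2) / 2)) * cis (s*q))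
        = complex_of_real (sqrt (2*pi) / c * exp (- ((s/c)\<^sup>2) / 2))"
proof -
  have "char std_normal_distribution (s/c) = complex_of_real (exp (- ((s/c)\<^sup>2) / 2))"
    by (simp add: char_std_normal_distribution)
  moreover have "char std_normal_distribution (s/c) =
      (LINT x|lborel. std_normal_density x *\<^sub>R iexp (s/c * x))"
    unfolding char_def by (subst integral_density) (auto simp: normal_density_nonneg)
  moreover have "(LINT x|lborel. std_normal_density x *\<^sub>R iexp (s/c * x))
      = \<bar>c\<bar> *\<^sub>R (LINT q|lborel. std_normal_density (0 + c*q) *\<^sub>R iexp (s/c * (0 + c*q)))"
    using c by (intro lborel_integral_real_affine) auto
  moreover have "(\<lambda>q. std_normal_density (0 + c*q) *\<^sub>R iexp (s/c * (0 + c*q)))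
     = (\<lambda>q. complex_of_real (1 / sqrt (2*pi)) * (complex_of_real (exp (- ((c*q)\<^sup>2) / 2)) * cis (s*q)))"
    using c by (auto simp: std_normal_density_def cis_conv_exp scaleR_conv_of_real mult_ac)
  ultimately have "complex_of_real (exp (- ((s/c)\<^sup>2) / 2)) = c *\<^sub>R (complex_of_real (1 / sqrt (2*pi)) *
      (LINT q|lborel. complex_of_real (exp (- ((c*q)\<^sup>2) / 2)) * cis (s*q)))"
    using c by simp
  then show ?thesis using c
    by (simp add: scaleR_conv_of_real field_simps)
qed



lemma cis_meas[measurable]: "cis \<in> borel_measurable borel"
  by (intro borel_measurable_continuous_onI continuous_intros)

lemma cnj_meas[measurable]: "cnj \<in> borel_measurable borel"
  by (intro borel_measurable_continuous_onI continuous_intros)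

lemma swap_int:
  fixes k u :: "real \<Rightarrow> complex" and r :: real
  assumes k: "integrable lborel k" and u: "integrable lborel u"
  shows "(LINT q|lborel. k q * (LINT p|lborel. cis (p*q*r) * u p))
       = (LINT p|lborel. u p * (LINT q|lborel. k q * cis (p*q*r)))"
proof -
  have PSF: "pair_sigma_finite lborel lborel"
    by (simp add: pair_sigma_finite_def lborel.sigma_finite_measure_axioms)
  have [measurable]: "k \<in> borel_measurable lborel" "u \<in> borel_measurable lborel"
    using k u by (auto dest: borel_measurable_integrable)
  let ?f = "\<lambda>q p. k q * (cis (p*q*r) * u p)"
  have meas: "(\<lambda>(q,p). ?f q p) \<in> borel_measurable (lborel \<Otimes>\<^sub>M lborel)"
    by measurable
  have int: "integrable (lborel \<Otimes>\<^sub>M lborel) (\<lambda>(q,p). ?f q p)"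
  proof (rule pair_sigma_finite.Fubini_integrable[OF PSF])
    show "integrable lborel (\<lambda>x. LINT y|lborel. norm (case (x, y) of (q, p) \<Rightarrow> ?f q p))"
      by (simp add: norm_mult integrable_mult_left integrable_norm[OF u] k)
    show "AE x in lborel. integrable lborel (\<lambda>y. case (x, y) of (q, p) \<Rightarrow> ?f q p)"
    proof (intro AE_I2)
      fix x
      have "integrable lborel (\<lambda>y. cis (y*x*r) * u y)"
        by (rule Bochner_Integration.integrable_bound[OF u]) (auto simp: norm_mult)
      then show "integrable lborel (\<lambda>y. case (x, y) of (q, p) \<Rightarrow> ?f q p)"
        by simp
    qed
  qed (rule meas)
  have "(LINT q|lborel. k q * (LINT p|lborel. cis (p*q*r) * u p)) = (LINT q|lborel. LINT p|lborel. ?f q p)"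
    by simp
  also have "\<dots> = (LINT p|lborel. LINT q|lborel. ?f q p)"
    using pair_sigma_finite.Fubini_integral[OF PSF int] by simp
  also have "\<dots> = (LINT p|lborel. u p * (LINT q|lborel. k q * cis (p*q*r)))"
    by (simp add: mult_ac flip: integral_mult_right_zero integral_mult_left_zero)
  finally show ?thesis .
qed

lemma meas_F:
  fixes f :: "real \<Rightarrow> complex" and r :: real
  assumes f: "integrable lborel f"
  shows "(\<lambda>q. LINT p|lborel. cis (p*q*r) * f p) \<in> borel_measurable lborel"
proof -
  have [measurable]: "f \<in> borel_measurable lborel" using f by (auto dest: borel_measurable_integrable)
  show ?thesis
    by (rule lborel.borel_measurable_lebesgue_integral) measurable
qed

lemma norm_F:
  fixes f :: "real \<Rightarrow> complex" and r :: real
  assumes f: "integrable lborel f"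
  shows "norm (LINT p|lborel. cis (p*q*r) * f p) \<le> (LINT p|lborel. norm (f p))"
proof -
  have "norm (LINT p|lborel. cis (p*q*r) * f p) \<le> (LINT p|lborel. norm (cis (p*q*r) * f p))"
    by (rule integral_norm_bound)
  also have "\<dots> = (LINT p|lborel. norm (f p))" by (simp add: norm_mult)
  finally show ?thesis .
qed


lemma gint: "(c::real) > 0 \<Longrightarrow> integrable lborel (\<lambda>q. exp (- ((c*q)\<^sup>2) / 2))"
proof -
  assume c: "c > 0"
  have "integrable lborel (\<lambda>q. std_normal_density (0 + c*q))"
    using c by (intro lborel_integrable_real_affine) auto
  then have "integrable lborel (\<lambda>q. sqrt (2*pi) * std_normal_density (0 + c*q))" by simp
  then show ?thesis by (simp add: std_normal_density_def)
qed

lemma core: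
  fixes f :: "real \<Rightarrow> complex" and h B \<omega> :: real
  assumes h: "h > 0" and f: "integrable lborel f"
    and supp: "\<And>p. f p \<noteq> 0 \<Longrightarrow> \<bar>p\<bar> < B"
    and om: "\<bar>\<omega>\<bar> > 2*B/h"
    and FI: "integrable lborel (\<lambda>q. (cmod (LINT p|lborel. cis (p*q*(1/h)) * f p))\<^sup>2)"
  shows "(LINT q|lborel. cis (-\<omega>*q) * complex_of_real ((cmod (LINT p|lborel. cis (p*q*(1/h)) * f p))\<^sup>2)) = 0"
proof -
  define F where "F q = (LINT p|lborel. cis (p*q*(1/h)) * f p)" for q
  define Nf where "Nf = (LINT p|lborel. norm (f p))"
  define \<delta> where "\<delta> = \<bar>\<omega>\<bar> - 2*B/h"
  define g where "g c q = complex_of_real (exp (- ((c*q)\<^sup>2) / 2)) * cis (-\<omega>*q)" for c q :: real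
  define G where "G c s = complex_of_real (sqrt (2*pi) / c * exp (- ((s/c)\<^sup>2) / 2))" for c s :: real
  define M where "M c = sqrt (2*pi) / c * exp (- ((\<delta>/c)\<^sup>2) / 2)" for c :: real
  have \<delta>: "\<delta> > 0" using om by (simp add: \<delta>_def)
  have Nf0: "Nf \<ge> 0" unfolding Nf_def by simp
  have [measurable]: "f \<in> borel_measurable lborel" using f by (auto dest: borel_measurable_integrable)
  have Fm[measurable]: "F \<in> borel_measurable lborel" unfolding F_def by (rule meas_F[OF f])
  have Fb: "norm (F q) \<le> Nf" for q unfolding F_def Nf_def by (rule norm_F[OF f])
  have cF: "cnj (F q) = (LINT p|lborel. cis (p*q*(-1/h)) * cnj (f p))" for q
  proof -
    have "cnj (F q) = (LINT p|lborel. cnj (cis (p*q*(1/h)) * f p))" unfolding F_def by (rule Bochner_Integration.integral_cnj[symmetric])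
    also have "\<dots> = (LINT p|lborel. cis (p*q*(-1/h)) * cnj (f p))"
      by (intro Bochner_Integration.integral_cong) (auto simp: cis_cnj)
    finally show ?thesis .
  qed
  have gm[measurable]: "g c \<in> borel_measurable lborel" for c unfolding g_def by measurable
  have gn: "norm (g c q) = exp (- ((c*q)\<^sup>2) / 2)" for c q unfolding g_def by (simp add: norm_mult)
  have gi: "integrable lborel (g c)" if c: "c > 0" for c
    by (rule Bochner_Integration.integrable_bound[OF gint[OF c]]) (auto simp: gn)
  have step: "(LINT q|lborel. g c q * complex_of_real ((cmod (F q))\<^sup>2))
      = (LINT p|lborel. f p * (LINT p'|lborel. cnj (f p') * G c ((p - p')/h - \<omega>)))"
    if c: "c > 0" for c
  proof -
    have "(LINT q|lborel. g c q * complex_of_real ((cmod (F q))\<^sup>2))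
        = (LINT q|lborel. (g c q * cnj (F q)) * (LINT p|lborel. cis (p*q*(1/h)) * f p))"
    proof (intro Bochner_Integration.integral_cong refl)
      fix q show "g c q * complex_of_real ((cmod (F q))\<^sup>2) = (g c q * cnj (F q)) * (LINT p|lborel. cis (p*q*(1/h)) * f p)"
        unfolding complex_norm_square by (simp add: F_def mult_ac)
    qed
    also have "\<dots> = (LINT p|lborel. f p * (LINT q|lborel. (g c q * cnj (F q)) * cis (p*q*(1/h))))"
    proof (rule swap_int[OF _ f])
      show "integrable lborel (\<lambda>q. g c q * cnj (F q))"
      proof (rule Bochner_Integration.integrable_bound[of lborel "\<lambda>q. Nf *\<^sub>R g c q"])
        show "integrable lborel (\<lambda>q. Nf *\<^sub>R g c q)" using gi[OF c] by simp
        show "AE x in lborel. norm (g c x * cnj (F x)) \<le> norm (Nf *\<^sub>R g c x)"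
          using Fb Nf0 by (intro AE_I2) (auto simp: norm_mult mult_ac intro!: mult_right_mono)
      qed measurable
    qed
    also have "\<dots> = (LINT p|lborel. f p * (LINT p'|lborel. cnj (f p') * G c ((p - p')/h - \<omega>)))"
    proof (intro Bochner_Integration.integral_cong refl)
      fix p
      have "(LINT q|lborel. (g c q * cnj (F q)) * cis (p*q*(1/h)))
          = (LINT q|lborel. (g c q * cis (p*q*(1/h))) * (LINT p'|lborel. cis (p'*q*(-1/h)) * cnj (f p')))"
        by (intro Bochner_Integration.integral_cong) (auto simp: cF mult_ac)
      also have "\<dots> = (LINT p'|lborel. cnj (f p') * (LINT q|lborel. (g c q * cis (p*q*(1/h))) * cis (p'*q*(-1/h))))"
      proof (rule swap_int)
        show "integrable lborel (\<lambda>q. g c q * cis (p*q*(1/h)))"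
          by (rule Bochner_Integration.integrable_bound[OF gi[OF c]]) (auto simp: norm_mult)
        show "integrable lborel (\<lambda>p'. cnj (f p'))" using f by simp
      qed
      also have "\<dots> = (LINT p'|lborel. cnj (f p') * G c ((p - p')/h - \<omega>))"
      proof (intro Bochner_Integration.integral_cong refl)
        fix p'
        have "(LINT q|lborel. (g c q * cis (p*q*(1/h))) * cis (p'*q*(-1/h)))
           = (LINT q|lborel. complex_of_real (exp (- ((c*q)\<^sup>2) / 2)) * cis (((p - p')/h - \<omega>)*q))"
          by (intro Bochner_Integration.integral_cong refl) (auto simp: g_def cis_mult mult_ac field_simps diff_divide_distrib)
        also have "\<dots> = G c ((p - p')/h - \<omega>)" unfolding G_def by (rule gauss_int[OF c])
        finally show "cnj (f p') * (LINT q|lborel. (g c q * cis (p*q*(1/h))) * cis (p'*q*(-1/h))) = cnj (f p') * G c ((p - p')/h - \<omega>)" by simp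
      qed
      finally show "f p * (LINT q|lborel. (g c q * cnj (F q)) * cis (p*q*(1/h))) = f p * (LINT p'|lborel. cnj (f p') * G c ((p - p')/h - \<omega>))" by simp
    qed
    finally show ?thesis .
  qed
  have Gb: "norm (G c ((p - p')/h - \<omega>)) \<le> M c" if c: "c > 0" and "f p \<noteq> 0" "f p' \<noteq> 0" for c p p'
  proof -
    have "\<bar>p\<bar> < B" "\<bar>p'\<bar> < B" using supp that by auto
    then have "\<bar>p - p'\<bar> / h < 2*B/h" using h by (intro divide_strict_right_mono) auto
    then have "\<bar>(p - p')/h\<bar> < 2*B/h" using h by (simp add: abs_divide)
    then have "\<delta> \<le> \<bar>(p - p')/h - \<omega>\<bar>" unfolding \<delta>_def
      using abs_triangle_ineq4[of "(p - p')/h" "(p - p')/h - \<omega>"] by simp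
    then have "\<bar>\<delta>/c\<bar> \<le> \<bar>((p - p')/h - \<omega>)/c\<bar>" using \<delta> c
      by (simp add: abs_divide divide_right_mono)
    then have "(\<delta>/c)\<^sup>2 \<le> (((p - p')/h - \<omega>)/c)\<^sup>2" by (simp only: abs_le_square_iff)
    then have E: "exp (- ((((p - p')/h - \<omega>)/c)\<^sup>2) / 2) \<le> exp (- ((\<delta>/c)\<^sup>2) / 2)" by simp
    have "norm (G c ((p - p')/h - \<omega>)) = \<bar>sqrt (2*pi) / c * exp (- ((((p - p')/h - \<omega>)/c)\<^sup>2) / 2)\<bar>"
      unfolding G_def by (rule norm_of_real)
    also have "\<dots> = sqrt (2*pi) / c * exp (- ((((p - p')/h - \<omega>)/c)\<^sup>2) / 2)"
      using c by (intro abs_of_nonneg) auto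
    also have "\<dots> \<le> M c" unfolding M_def using c E by (intro mult_left_mono) auto
    finally show ?thesis .
  qed
  have bound: "norm (LINT q|lborel. g c q * complex_of_real ((cmod (F q))\<^sup>2)) \<le> Nf * (Nf * M c)"
    if c: "c > 0" for c
  proof -
    have M0: "M c \<ge> 0" using c by (simp add: M_def)
    have inner: "norm (f p * (LINT p'|lborel. cnj (f p') * G c ((p - p')/h - \<omega>))) \<le> norm (f p) * (Nf * M c)" for p
    proof (cases "f p = 0")
      case False
      have "norm (LINT p'|lborel. cnj (f p') * G c ((p - p')/h - \<omega>)) \<le> (LINT p'|lborel. norm (cnj (f p') * G c ((p - p')/h - \<omega>)))"
        by (rule integral_norm_bound)
      also have "\<dots> \<le> (LINT p'|lborel. norm (f p') * M c)"
      proof (rule integral_mono')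
        show "integrable lborel (\<lambda>p'. norm (f p') * M c)" using f by (intro integrable_mult_left integrable_norm)
        fix p' show "0 \<le> norm (f p') * M c" using M0 by simp
        show "norm (cnj (f p') * G c ((p - p')/h - \<omega>)) \<le> norm (f p') * M c"
          using Gb[OF c False, of p'] by (cases "f p' = 0") (auto simp: norm_mult intro: mult_left_mono)
      qed
      also have "\<dots> = Nf * M c" by (simp add: Nf_def)
      finally show ?thesis by (simp add: norm_mult mult_left_mono)
    qed simp
    have "norm (LINT q|lborel. g c q * complex_of_real ((cmod (F q))\<^sup>2))
        = norm (LINT p|lborel. f p * (LINT p'|lborel. cnj (f p') * G c ((p - p')/h - \<omega>)))"
      using step[OF c] by simp
    also have "\<dots> \<le> (LINT p|lborel. norm (f p * (LINT p'|lborel. cnj (f p') * G c ((p - p')/h - \<omega>))))"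
      by (rule integral_norm_bound)
    also have "\<dots> \<le> (LINT p|lborel. norm (f p) * (Nf * M c))"
    proof (rule integral_mono')
      show "integrable lborel (\<lambda>p. norm (f p) * (Nf * M c))" using f by (intro integrable_mult_left integrable_norm)
      fix p show "0 \<le> norm (f p) * (Nf * M c)" using M0 Nf0 by simp
      show "norm (f p * (LINT p'|lborel. cnj (f p') * G c ((p - p')/h - \<omega>))) \<le> norm (f p) * (Nf * M c)"
        by (rule inner)
    qed
    also have "\<dots> = Nf * (Nf * M c)" by (simp add: Nf_def)
    finally show ?thesis .
  qed
  define I where "I n = (LINT q|lborel. g (1 / real (Suc n)) q * complex_of_real ((cmod (F q))\<^sup>2))" for n
  have FI': "integrable lborel (\<lambda>q. (cmod (F q))\<^sup>2)" using FI by (simp add: F_def)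
  have lim1: "I \<longlonglongrightarrow> (LINT q|lborel. cis (-\<omega>*q) * complex_of_real ((cmod (F q))\<^sup>2))"
    unfolding I_def
  proof (rule integral_dominated_convergence[where w="\<lambda>q. (cmod (F q))\<^sup>2"])
    show "(\<lambda>q. cis (-\<omega>*q) * complex_of_real ((cmod (F q))\<^sup>2)) \<in> borel_measurable lborel" by measurable
    show "(\<lambda>q. g (1 / real (Suc i)) q * complex_of_real ((cmod (F q))\<^sup>2)) \<in> borel_measurable lborel" for i
      by measurable
    show "integrable lborel (\<lambda>q. (cmod (F q))\<^sup>2)" by (rule FI')
    show "AE x in lborel. (\<lambda>i. g (1 / real (Suc i)) x * complex_of_real ((cmod (F x))\<^sup>2)) \<longlonglongrightarrow>
        cis (-\<omega>*x) * complex_of_real ((cmod (F x))\<^sup>2)"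
    proof (intro AE_I2)
      fix q
      have "(\<lambda>n. 1 / real (Suc n)) \<longlonglongrightarrow> 0" by real_asymp
      then have "(\<lambda>n. exp (- ((1 / real (Suc n) * q)\<^sup>2) / 2)) \<longlonglongrightarrow> exp (- ((0 * q)\<^sup>2) / 2)"
        by (intro tendsto_intros) auto
      then have "(\<lambda>n. complex_of_real (exp (- ((1 / real (Suc n) * q)\<^sup>2) / 2)) * cis (-\<omega>*q) * complex_of_real ((cmod (F q))\<^sup>2))
          \<longlonglongrightarrow> complex_of_real 1 * cis (-\<omega>*q) * complex_of_real ((cmod (F q))\<^sup>2)"
        by (intro tendsto_intros) auto
      then show "(\<lambda>i. g (1 / real (Suc i)) q * complex_of_real ((cmod (F q))\<^sup>2)) \<longlonglongrightarrow>
        cis (-\<omega>*q) * complex_of_real ((cmod (F q))\<^sup>2)" by (simp add: g_def)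
    qed
    show "AE x in lborel. norm (g (1 / real (Suc i)) x * complex_of_real ((cmod (F x))\<^sup>2)) \<le> (cmod (F x))\<^sup>2" for i
    proof (intro AE_I2)
      fix x
      have "norm (g (1 / real (Suc i)) x * complex_of_real ((cmod (F x))\<^sup>2))
          = exp (- ((1 / real (Suc i) * x)\<^sup>2) / 2) * (cmod (F x))\<^sup>2"
        by (simp add: norm_mult gn del: of_real_power)
      also have "\<dots> \<le> 1 * (cmod (F x))\<^sup>2" by (intro mult_right_mono) auto
      finally show "norm (g (1 / real (Suc i)) x * complex_of_real ((cmod (F x))\<^sup>2)) \<le> (cmod (F x))\<^sup>2" by simp
    qed
  qed
  have Mlim: "(\<lambda>n. Nf * (Nf * M (1 / real (Suc n)))) \<longlonglongrightarrow> 0"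
  proof -
    have "(\<lambda>n. sqrt (2*pi) / (1 / real (Suc n)) * exp (- ((\<delta> / (1 / real (Suc n)))\<^sup>2) / 2)) \<longlonglongrightarrow> 0"
      using \<delta> by real_asymp
    then have "(\<lambda>n. M (1 / real (Suc n))) \<longlonglongrightarrow> 0" unfolding M_def .
    then show ?thesis by (intro tendsto_mult_right_zero)
  qed
  have lim0: "I \<longlonglongrightarrow> 0"
  proof (rule Lim_null_comparison[OF _ Mlim])
    show "\<forall>\<^sub>F n in sequentially. norm (I n) \<le> Nf * (Nf * M (1 / real (Suc n)))"
      unfolding I_def by (intro always_eventually allI bound) simp
  qed
  from LIMSEQ_unique[OF lim1 lim0] show ?thesis by (simp add: F_def)
qed


lemma le_one_plus_sq: "(x::real) \<ge> 0 \<Longrightarrow> x \<le> 1 + x\<^sup>2"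
proof -
  assume x: "x \<ge> 0"
  have "0 \<le> (x - 1)\<^sup>2" by simp
  then have "2*x \<le> x\<^sup>2 + 1" by (simp add: power2_eq_square algebra_simps)
  moreover have "0 \<le> x\<^sup>2" by simp
  ultimately show ?thesis using x by linarith
qed

lemma band_zero:
  fixes \<psi> :: "real \<Rightarrow> complex" and hbar \<kappa> \<omega> :: real
  assumes h: "hbar > 0" and \<kappa>: "\<kappa> > 0" and psi: "normalized_L2 \<psi>"
    and ml: "momentum_limited hbar \<kappa> \<psi>" and om: "\<bar>\<omega>\<bar> > 2*\<kappa>"
  shows "(LINT q|lborel. cis (-\<omega>*q) * complex_of_real ((cmod (\<psi> q))\<^sup>2)) = 0"
proof -
  define S where "S = {-hbar*\<kappa> <..< hbar*\<kappa>}"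
  from ml obtain \<psi>t where m: "set_borel_measurable lborel S \<psi>t"
    and i: "set_integrable lborel S (\<lambda>p. (cmod (\<psi>t p))\<^sup>2)"
    and ae: "AE q in lborel. \<psi> q = (LINT p : S | lborel. cis (p * q / hbar) * \<psi>t p)"
    unfolding momentum_limited_def S_def by blast
  define f where "f p = indicator S p *\<^sub>R \<psi>t p" for p
  have fm[measurable]: "f \<in> borel_measurable lborel" using m unfolding set_borel_measurable_def f_def .
  have iS: "integrable lborel (indicator S :: real \<Rightarrow> real)"
    using h \<kappa> by (simp add: integrable_indicator_iff S_def)
  have i2: "integrable lborel (\<lambda>p. indicator S p *\<^sub>R (cmod (\<psi>t p))\<^sup>2)"
    using i unfolding set_integrable_def .
  have fi: "integrable lborel f"
  proof (rule Bochner_Integration.integrable_bound[of lborel "\<lambda>p. indicator S p + indicator S p *\<^sub>R (cmod (\<psi>t p))\<^sup>2"])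
    show "integrable lborel (\<lambda>p. indicator S p + indicator S p *\<^sub>R (cmod (\<psi>t p))\<^sup>2)"
      using iS i2 by (rule Bochner_Integration.integrable_add)
    show "AE x in lborel. norm (f x) \<le> norm (indicator S x + indicator S x *\<^sub>R (cmod (\<psi>t x))\<^sup>2 :: real)"
      by (intro AE_I2) (auto simp: f_def indicator_def le_one_plus_sq)
  qed (rule fm)
  have supp: "\<bar>p\<bar> < hbar*\<kappa>" if "f p \<noteq> 0" for p
    using that by (auto simp: f_def S_def indicator_def)
  define F where "F q = (LINT p|lborel. cis (p*q*(1/hbar)) * f p)" for q
  have Fm[measurable]: "F \<in> borel_measurable lborel" unfolding F_def by (rule meas_F[OF fi])
  have eqF: "(LINT p : S | lborel. cis (p * q / hbar) * \<psi>t p) = F q" for q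
    unfolding set_lebesgue_integral_def F_def
    by (intro Bochner_Integration.integral_cong refl) (simp add: f_def)
  have ae': "AE q in lborel. \<psi> q = F q" using ae by (simp add: eqF)
  have psim[measurable]: "\<psi> \<in> borel_measurable lborel" and psii: "integrable lborel (\<lambda>x. (cmod (\<psi> x))\<^sup>2)"
    using psi unfolding normalized_L2_def by auto
  have FI: "integrable lborel (\<lambda>q. (cmod (F q))\<^sup>2)"
    using psii ae' by (subst integrable_cong_AE[where g="\<lambda>x. (cmod (\<psi> x))\<^sup>2"]) (auto elim: AE_mp)
  have "\<bar>\<omega>\<bar> > 2*(hbar*\<kappa>)/hbar" using om h by simp
  from core[OF h fi supp this] FI
  have "(LINT q|lborel. cis (-\<omega>*q) * complex_of_real ((cmod (F q))\<^sup>2)) = 0"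
    by (simp add: F_def)
  moreover have "(LINT q|lborel. cis (-\<omega>*q) * complex_of_real ((cmod (\<psi> q))\<^sup>2))
      = (LINT q|lborel. cis (-\<omega>*q) * complex_of_real ((cmod (F q))\<^sup>2))"
    using ae' by (intro integral_cong_AE) (auto elim: AE_mp)
  ultimately show ?thesis by simp
qed

lemma gap:
  assumes "inj_on a {..<n}" "k < n" "l < n" "k \<noteq> l"
  shows "0 < min_gap n a" "min_gap n a \<le> \<bar>a k - a l\<bar>"
proof -
  define A where "A = {a k - a l | k l. k < n \<and> l < n \<and> a l < a k}"
  have "A \<subseteq> (\<lambda>(k,l). a k - a l) ` ({..<n} \<times> {..<n})" unfolding A_def by auto
  then have fin: "finite A" by (rule finite_subset) auto
  have ne: "a k \<noteq> a l" using assms by (auto dest: inj_onD)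
  have mem: "\<bar>a k - a l\<bar> \<in> A"
  proof (cases "a l < a k")
    case True then show ?thesis using assms unfolding A_def by auto
  next
    case False then have "a k < a l" using ne by auto
    then have "\<bar>a k - a l\<bar> = a l - a k" by simp
    then show ?thesis using assms \<open>a k < a l\<close> unfolding A_def by blast
  qed
  have pos: "\<forall>x\<in>A. 0 < x" unfolding A_def by auto
  show "0 < min_gap n a" unfolding min_gap_def A_def[symmetric]
    using fin mem pos by (subst Min_gr_iff) auto
  show "min_gap n a \<le> \<bar>a k - a l\<bar>" unfolding min_gap_def A_def[symmetric]
    using fin mem by (rule Min_le)
qed



theorem mainTheorem2:
  fixes n :: nat and a :: "nat \<Rightarrow> real" and c :: "nat \<Rightarrow> complex"
    and hbar \<alpha> g0 lam :: real and \<psi>Pr \<Phi>Po :: "real \<Rightarrow> complex"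
  assumes nondeg: "inj_on a {..<n}"
    and hbar: "hbar > 0" and alpha: "\<alpha> > 0" and g0: "g0 > 0" and lam: "lam > 0"
    and psi: "normalized_L2 \<psi>Pr" and Phi: "normalized_L2 \<Phi>Po"
  shows
   "(\<forall>\<kappa>0 > 0. momentum_limited hbar \<kappa>0 \<psi>Pr \<longrightarrow>
       (\<forall>k<n. \<forall>l<n. \<forall>t. k \<noteq> l \<and> t > 2 * \<kappa>0 * hbar / (\<alpha> * g0 * min_gap n a) \<longrightarrow>
          decoh hbar \<alpha> g0 lam \<psi>Pr \<Phi>Po a k l t = 0 \<and> rho_S hbar \<alpha> g0 lam \<psi>Pr \<Phi>Po a c t k l = 0))
  \<and> (\<forall>b0 > 0. momentum_limited hbar b0 \<Phi>Po \<and> lam > 2 * b0 * hbar / min_gap n a \<longrightarrow>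
       (\<forall>k<n. \<forall>l<n. \<forall>t > 0. k \<noteq> l \<longrightarrow>
          decoh hbar \<alpha> g0 lam \<psi>Pr \<Phi>Po a k l t = 0 \<and> rho_S hbar \<alpha> g0 lam \<psi>Pr \<Phi>Po a c t k l = 0))"
  proof (rule conjI; intro allI impI)
  fix \<kappa>0 :: real and k l :: nat and t :: real
  assume \<kappa>0: "\<kappa>0 > 0" and ml: "momentum_limited hbar \<kappa>0 \<psi>Pr" and kn: "k < n" and ln: "l < n"
    and kt: "k \<noteq> l \<and> t > 2 * \<kappa>0 * hbar / (\<alpha> * g0 * min_gap n a)"
  have kl: "k \<noteq> l" and tb: "t > 2 * \<kappa>0 * hbar / (\<alpha> * g0 * min_gap n a)" using kt by auto
  have a0: "0 < min_gap n a" and a0le: "min_gap n a \<le> \<bar>a k - a l\<bar>" using gap[OF nondeg kn ln kl] by auto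
  have pos: "\<alpha> * g0 * min_gap n a > 0" using alpha g0 a0 by simp
  have t1: "t * (\<alpha> * g0 * min_gap n a) > 2 * \<kappa>0 * hbar" using tb pos by (simp add: pos_divide_less_eq)
  have t0: "t > 0" using tb pos \<kappa>0 hbar by (smt (verit) divide_pos_pos mult_pos_pos)
  define \<omega> where "\<omega> = (1 / hbar) * \<alpha> * g0 * t * (a k - a l)"
  have "t * (\<alpha> * g0 * min_gap n a) \<le> t * (\<alpha> * g0 * \<bar>a k - a l\<bar>)"
    using t0 alpha g0 a0le by (intro mult_left_mono) auto
  then have "2 * \<kappa>0 * hbar < t * (\<alpha> * g0 * \<bar>a k - a l\<bar>)" using t1 by linarith
  moreover have "\<bar>\<omega>\<bar> = t * (\<alpha> * g0 * \<bar>a k - a l\<bar>) / hbar"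
    unfolding \<omega>_def using t0 alpha g0 hbar by (simp add: abs_mult)
  ultimately have om: "\<bar>\<omega>\<bar> > 2 * \<kappa>0" using hbar by (simp add: pos_less_divide_eq mult_ac)
  have "(LINT q|lborel. cis (-\<omega>*q) * complex_of_real ((cmod (\<psi>Pr q))\<^sup>2)) = 0"
    by (rule band_zero[OF hbar \<kappa>0 psi ml om])
  then have "decoh hbar \<alpha> g0 lam \<psi>Pr \<Phi>Po a k l t = 0"
    unfolding decoh_def \<omega>_def by (simp add: mult_ac)
  then show "decoh hbar \<alpha> g0 lam \<psi>Pr \<Phi>Po a k l t = 0 \<and> rho_S hbar \<alpha> g0 lam \<psi>Pr \<Phi>Po a c t k l = 0"
    using kl by (simp add: rho_S_def)
next
  fix b0 :: real and k l :: nat and t :: real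
  assume b0: "b0 > 0" and mlb: "momentum_limited hbar b0 \<Phi>Po \<and> lam > 2 * b0 * hbar / min_gap n a"
    and kn: "k < n" and ln: "l < n" and t0: "t > 0" and kl: "k \<noteq> l"
  have ml: "momentum_limited hbar b0 \<Phi>Po" and lb: "lam > 2 * b0 * hbar / min_gap n a" using mlb by auto
  have a0: "0 < min_gap n a" and a0le: "min_gap n a \<le> \<bar>a k - a l\<bar>" using gap[OF nondeg kn ln kl] by auto
  have l1: "lam * min_gap n a > 2 * b0 * hbar" using lb a0 by (simp add: pos_divide_less_eq)
  define \<omega> where "\<omega> = (lam / hbar) * (a k - a l)"
  have "lam * min_gap n a \<le> lam * \<bar>a k - a l\<bar>" using lam a0le by (intro mult_left_mono) auto
  then have "2 * b0 * hbar < lam * \<bar>a k - a l\<bar>" using l1 by linarith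
  moreover have "\<bar>\<omega>\<bar> = lam * \<bar>a k - a l\<bar> / hbar"
    unfolding \<omega>_def using lam hbar by (simp add: abs_mult)
  ultimately have om: "\<bar>\<omega>\<bar> > 2 * b0" using hbar by (simp add: pos_less_divide_eq mult_ac)
  have "(LINT q|lborel. cis (-\<omega>*q) * complex_of_real ((cmod (\<Phi>Po q))\<^sup>2)) = 0"
    by (rule band_zero[OF hbar b0 Phi ml om])
  then have "decoh hbar \<alpha> g0 lam \<psi>Pr \<Phi>Po a k l t = 0"
    unfolding decoh_def \<omega>_def by (simp add: mult_ac)
  then show "decoh hbar \<alpha> g0 lam \<psi>Pr \<Phi>Po a k l t = 0 \<and> rho_S hbar \<alpha> g0 lam \<psi>Pr \<Phi>Po a c t k l = 0"
    using kl by (simp add: rho_S_def)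
qed

end
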